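(* Let $X,Y$ be finite abelian groups, let $Q\in M_{X\times Y}(\mathbb T)$ be generic, and put $$\theta_{ic}^{ke}=\frac{Q_{i,e-c}Q_{i-k,e}}{Q_{ie}Q_{i-k,e-c}}\qquad(i,k\in X,\ c,e\in Y).$$ For every $k\in X$ there is a group representation $\pi^k:\Gamma_{X,Y}\to U_{|Y|}$ on $\mathbb C^Y$ (standard basis $(\epsilon_e)_{e\in Y}$) given by $\pi^k(c^{(i)})\epsilon_e=\theta_{ic}^{ke}\epsilon_{e-c}$. Moreover the family $(\pi^k)_{k\in X}$ is projectively faithful: if $t\in\Gamma_{X,Y}$ is such that $\pi^k(t)$ is a scalar matrix for every $k\in X$, then $t=1$.
   Context: Finite abelian groups are written additively. $\Gamma_{X,Y}$ is the quotient of the free product $Y^{*X}$ of $|X|$ copies of $Y$ (the copy of $c\in Y$ in the $i$-th factor is $c^{(i)}$) by the relations $[c_1^{(i_1)}\cdots c_s^{(i_s)},d_1^{(j_1)}\cdots d_s^{(j_s)}]=1$ whenever $\sum_rc_r=\sum_rd_r=0$. Elements $p_1,\dots,p_m\in\mathbb T$ are root independent if $p_1^{r_1}\cdots p_m^{r_m}=1$ with $r_i\in\mathbb Z$ implies $r_1=\dots=r_m=0$. $Q$ is generic if it is dephased ($Q_{0c}=Q_{i0}=1$ for all $i\in X,c\in Y$) and the elements $Q_{ic}$ with $i\neq0,c\neq0$ are root independent. *)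

theory Defs
  imports "HOL-Analysis.Analysis"
begin

text \<open>Words in the generators c^(i) of the free product of |X| copies of Y:
  the pair (i,c) stands for c^(i).  Gamma_{X,Y} is the monoid of such words modulo
  the congruence gamma_eq below (it is a group, since (-c)^(i) inverts c^(i)).\<close>

inductive gamma_eq :: "('x::{finite,ab_group_add} \<times> 'y::{finite,ab_group_add}) list
    \<Rightarrow> ('x \<times> 'y) list \<Rightarrow> bool" where
  refl: "gamma_eq a a"
| sym: "gamma_eq a b \<Longrightarrow> gamma_eq b a"
| trans: "gamma_eq a b \<Longrightarrow> gamma_eq b c \<Longrightarrow> gamma_eq a c"
| app: "gamma_eq a b \<Longrightarrow> gamma_eq c d \<Longrightarrow> gamma_eq (a @ c) (b @ d)"
| unit: "gamma_eq [(i, 0)] []"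
| mult: "gamma_eq [(i, c), (i, d)] [(i, c + d)]"
| comm: "length a = length b \<Longrightarrow> sum_list (map snd a) = 0 \<Longrightarrow> sum_list (map snd b) = 0
         \<Longrightarrow> gamma_eq (a @ b) (b @ a)"

definition on_circle :: "complex \<Rightarrow> bool" where
  "on_circle z \<longleftrightarrow> cmod z = 1"

definition root_independent_on :: "('a \<Rightarrow> complex) \<Rightarrow> 'a set \<Rightarrow> bool" where
  "root_independent_on p S \<longleftrightarrow>
     (\<forall>r :: 'a \<Rightarrow> int. (\<Prod>s\<in>S. p s powi r s) = 1 \<longrightarrow> (\<forall>s\<in>S. r s = 0))"

definition dephased :: "('x::ab_group_add \<Rightarrow> 'y::ab_group_add \<Rightarrow> complex) \<Rightarrow> bool" where
  "dephased Q \<longleftrightarrow> (\<forall>c. Q 0 c = 1) \<and> (\<forall>i. Q i 0 = 1)"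

definition generic :: "('x::ab_group_add \<Rightarrow> 'y::ab_group_add \<Rightarrow> complex) \<Rightarrow> bool" where
  "generic Q \<longleftrightarrow> dephased Q \<and>
     root_independent_on (\<lambda>(i, c). Q i c) {(i, c). i \<noteq> 0 \<and> c \<noteq> 0}"

definition theta :: "('x::ab_group_add \<Rightarrow> 'y::ab_group_add \<Rightarrow> complex)
    \<Rightarrow> 'x \<Rightarrow> 'y \<Rightarrow> 'x \<Rightarrow> 'y \<Rightarrow> complex" where
  "theta Q i c k e = (Q i (e - c) * Q (i - k) e) / (Q i e * Q (i - k) (e - c))"

text \<open>pi^k(c^(i)) eps_e = theta eps_{e-c}: column e has the entry at row e - c.\<close>
definition gen_mat :: "('x::ab_group_add \<Rightarrow> 'y::{finite,ab_group_add} \<Rightarrow> complex)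
    \<Rightarrow> 'x \<Rightarrow> 'x \<Rightarrow> 'y \<Rightarrow> complex ^('y::{finite,ab_group_add}) ^('y::{finite,ab_group_add})" where
  "gen_mat Q k i c = (\<chi> r e. if r = e - c then theta Q i c k e else 0)"

definition word_mat :: "('x::ab_group_add \<Rightarrow> 'y::{finite,ab_group_add} \<Rightarrow> complex)
    \<Rightarrow> 'x \<Rightarrow> ('x \<times> 'y) list \<Rightarrow> complex ^('y::{finite,ab_group_add}) ^('y::{finite,ab_group_add})" where
  "word_mat Q k w = foldr (\<lambda>(i, c) M. gen_mat Q k i c ** M) w (mat 1)"

definition unitary_mat :: "complex ^'n ^'n \<Rightarrow> bool" where
  "unitary_mat A \<longleftrightarrow> A ** (\<chi> i j. cnj (A $ j $ i)) = mat 1"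

end

theory Submission
  imports Defs
begin


abbreviation ssum :: "('x \<times> 'y::ab_group_add) list \<Rightarrow> 'y" where
  "ssum w \<equiv> sum_list (map snd w)"

fun phi :: "('x::ab_group_add \<Rightarrow> 'y::ab_group_add \<Rightarrow> complex) \<Rightarrow> 'x \<Rightarrow> ('x \<times> 'y) list \<Rightarrow> 'y \<Rightarrow> complex" where
  "phi Q k [] e = 1"
| "phi Q k ((i,c)#w) e = phi Q k w e * theta Q i c k (e - ssum w)"

lemma word_mat_eq:
  fixes Q :: "'x::{finite,ab_group_add} \<Rightarrow> 'y::{finite,ab_group_add} \<Rightarrow> complex"
  shows "word_mat Q k w = (\<chi> r e. if r = e - ssum w then phi Q k w e else 0)"
proof (induction w)
  case Nil
  then show ?case by (simp add: word_mat_def mat_def vec_eq_iff)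
next
  case (Cons a w)
  obtain i c where a: "a = (i,c)" by fastforce
  have "word_mat Q k (a # w) = gen_mat Q k i c ** word_mat Q k w"
    by (simp add: word_mat_def a)
  also have "\<dots> = (\<chi> r e. if r = e - ssum (a#w) then phi Q k (a#w) e else 0)"
  proof -
    have "(\<Sum>t\<in>UNIV. (if r = t - c then theta Q i c k t else 0) *
            (if t = e - ssum w then phi Q k w e else 0))
        = (if r = e - ssum (a#w) then phi Q k (a#w) e else 0)" for r e
    proof -
      have "(\<Sum>t\<in>UNIV. (if r = t - c then theta Q i c k t else 0) *
            (if t = e - ssum w then phi Q k w e else 0))
          = (\<Sum>t\<in>UNIV. if t = e - ssum w then (if r = t - c then theta Q i c k t else 0) * phi Q k w e else 0)"
        by (rule sum.cong) auto
      also have "\<dots> = (if r = e - ssum w - c then theta Q i c k (e - ssum w) else 0) * phi Q k w e"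
        by (simp add: sum.delta)
      finally show ?thesis by (simp add: a diff_diff_eq add.commute)
    qed
    then show ?thesis unfolding Cons.IH
      by (simp add: vec_eq_iff matrix_matrix_mult_def gen_mat_def)
  qed
  finally show ?case .
qed

lemma phi_append: "phi Q k (a @ b) e = phi Q k b e * phi Q k a (e - ssum b)"
  by (induction a arbitrary: e) (auto simp: algebra_simps diff_diff_eq)

lemma gamma_inv:
  fixes Q :: "'x::{finite,ab_group_add} \<Rightarrow> 'y::{finite,ab_group_add} \<Rightarrow> complex"
  assumes nz: "\<And>i c. Q i c \<noteq> 0"
  shows "gamma_eq a b \<Longrightarrow> ssum a = ssum b \<and> phi Q k a = phi Q k b"
proof (induction rule: gamma_eq.induct)
  case (app a b c d)
  then show ?case by (auto simp: phi_append fun_eq_iff)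
next
  case (unit i)
  then show ?case by (auto simp: fun_eq_iff theta_def nz)
next
  case (mult i c d)
  show ?case
    by (auto simp: fun_eq_iff theta_def nz diff_diff_eq add.commute field_simps)
next
  case (comm a b)
  then show ?case by (auto simp: phi_append fun_eq_iff)
qed auto



lemma norm_theta: assumes "\<And>i c. cmod (Q i c) = 1" shows "cmod (theta Q i c k e) = 1"
  by (simp add: theta_def norm_mult norm_divide assms)

lemma norm_phi: assumes "\<And>i c. cmod (Q i c) = 1" shows "cmod (phi Q k w e) = 1"
  by (induction w arbitrary: e) (auto simp: norm_mult norm_theta assms)

lemma unitary_word:
  fixes Q :: "'x::{finite,ab_group_add} \<Rightarrow> 'y::{finite,ab_group_add} \<Rightarrow> complex"
  assumes "\<And>i c. cmod (Q i c) = 1"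
  shows "unitary_mat (word_mat Q k w)"
proof -
  have "(\<Sum>e\<in>UNIV. (if r = e - ssum w then phi Q k w e else 0) *
          cnj (if t = e - ssum w then phi Q k w e else 0)) = (if r = t then 1 else 0)" for r t
  proof -
    have "(\<Sum>e\<in>UNIV. (if r = e - ssum w then phi Q k w e else 0) *
          cnj (if t = e - ssum w then phi Q k w e else 0))
        = (\<Sum>e\<in>UNIV. if e = r + ssum w then (if t = r then phi Q k w e * cnj (phi Q k w e) else 0) else 0)"
      by (rule sum.cong) (auto simp: algebra_simps)
    also have "\<dots> = (if t = r then phi Q k w (r + ssum w) * cnj (phi Q k w (r + ssum w)) else 0)"
      by (simp add: sum.delta)
    also have "\<dots> = (if r = t then 1 else 0)"
      using norm_phi[of Q k w "r + ssum w"] assms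
      by (auto simp flip: complex_norm_square)
    finally show ?thesis .
  qed
  then show ?thesis
    by (simp add: unitary_mat_def word_mat_eq vec_eq_iff matrix_matrix_mult_def mat_def)
qed



context
  fixes dummy :: "'x::{finite,ab_group_add} \<times> 'y::{finite,ab_group_add}"
begin
end

lemma ge_appL: "gamma_eq a b \<Longrightarrow> gamma_eq (c @ a) (c @ b)"
  using gamma_eq.app gamma_eq.refl by blast
lemma ge_appR: "gamma_eq a b \<Longrightarrow> gamma_eq (a @ c) (b @ c)"
  using gamma_eq.app gamma_eq.refl by blast
lemma ge_mid: "gamma_eq a b \<Longrightarrow> gamma_eq (c @ a @ d) (c @ b @ d)"
  using ge_appL ge_appR by blast

lemma ge_rep0: "gamma_eq (replicate n (i, 0)) []"
proof (induction n)
  case 0 then show ?case by (simp add: gamma_eq.refl)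
next
  case (Suc n)
  show ?case using gamma_eq.app[OF gamma_eq.unit Suc.IH] by simp
qed

lemma sum_list_rep0[simp]: "sum_list (replicate n (0::'a::monoid_add)) = 0"
  by (induction n) auto

lemma ge_comm:
  fixes a b :: "('x::{finite,ab_group_add} \<times> 'y::{finite,ab_group_add}) list"
  assumes "ssum a = 0" "ssum b = 0"
  shows "gamma_eq (a @ b) (b @ a)"
proof -
  define a' where "a' = a @ replicate (length b) ((0::'x), (0::'y))"
  define b' where "b' = b @ replicate (length a) ((0::'x), (0::'y))"
  have ha: "gamma_eq a' a" unfolding a'_def using ge_appL[OF ge_rep0, of a] by simp
  have hb: "gamma_eq b' b" unfolding b'_def using ge_appL[OF ge_rep0, of b] by simp
  have "gamma_eq (a' @ b') (b' @ a')"
    by (rule gamma_eq.comm) (auto simp: a'_def b'_def assms)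
  then show ?thesis
    using gamma_eq.app[OF ha hb] gamma_eq.app[OF hb ha] gamma_eq.sym gamma_eq.trans by metis
qed

lemma ge_cancel: "gamma_eq [(i, c), (i, - c)] []"
proof -
  have "gamma_eq [(i, c), (i, - c)] [(i, 0)]" using gamma_eq.mult[of i c "-c"] by simp
  then show ?thesis using gamma_eq.trans gamma_eq.unit by blast
qed

lemma ge_cancel': "gamma_eq [(i, - c), (i, c)] []"
proof -
  have "gamma_eq [(i, - c), (i, c)] [(i, 0)]" using gamma_eq.mult[of i "-c" c] by simp
  then show ?thesis using gamma_eq.trans gamma_eq.unit by blast
qed

definition uw :: "'x::ab_group_add \<times> 'y::ab_group_add \<Rightarrow> ('x \<times> 'y) list" where
  "uw p = [(fst p, snd p), (0, - snd p)]"
definition uiw :: "'x::ab_group_add \<times> 'y::ab_group_add \<Rightarrow> ('x \<times> 'y) list" where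
  "uiw p = [(0, snd p), (fst p, - snd p)]"

lemma ssum_uw[simp]: "ssum (uw p) = 0" and ssum_uiw[simp]: "ssum (uiw p) = 0"
  by (simp_all add: uw_def uiw_def)

lemma ge_uiw_uw: "gamma_eq (uiw p @ uw p) []"
proof -
  have "gamma_eq ([(0, snd p)] @ [(fst p, - snd p), (fst p, snd p)] @ [(0, - snd p)])
                 ([(0, snd p)] @ [] @ [(0, - snd p)])"
    by (rule ge_mid[OF ge_cancel'])
  then show ?thesis using ge_cancel[of 0 "snd p"] gamma_eq.trans
    by (fastforce simp: uw_def uiw_def)
qed

lemma ge_uw_uiw: "gamma_eq (uw p @ uiw p) []"
proof -
  have "gamma_eq ([(fst p, snd p)] @ [(0, - snd p), (0, snd p)] @ [(fst p, - snd p)])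
                 ([(fst p, snd p)] @ [] @ [(fst p, - snd p)])"
    by (rule ge_mid[OF ge_cancel'])
  then show ?thesis using ge_cancel[of "fst p" "snd p"] gamma_eq.trans
    by (fastforce simp: uw_def uiw_def)
qed

definition blk :: "'x::ab_group_add \<times> 'y::ab_group_add \<Rightarrow> int \<Rightarrow> ('x \<times> 'y) list" where
  "blk p m = (if m \<ge> 0 then concat (replicate (nat m) (uw p)) else concat (replicate (nat (-m)) (uiw p)))"

lemma ssum_concat0: "(\<And>x. x \<in> set L \<Longrightarrow> ssum x = 0) \<Longrightarrow> ssum (concat L) = 0"
  by (induction L) auto

lemma ssum_blk[simp]: "ssum (blk p m) = 0"
  by (auto simp: blk_def intro!: ssum_concat0)

lemma concat_rep_snoc: "concat (replicate n x) @ x = concat (replicate (Suc n) x)"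
  by (induction n) auto

lemma ge_blk_uw: "gamma_eq (blk p m @ uw p) (blk p (m + 1))"
proof (cases "m \<ge> 0")
  case True
  then have "nat (m+1) = Suc (nat m)" by simp
  then show ?thesis using True by (simp add: blk_def concat_rep_snoc gamma_eq.refl)
next
  case False
  define j where "j = nat (-m-1)"
  have j: "nat (-m) = Suc j" "nat (-(m+1)) = j" using False unfolding j_def by arith+
  have "gamma_eq (concat (replicate j (uiw p)) @ (uiw p @ uw p)) (concat (replicate j (uiw p)) @ [])"
    by (rule ge_appL[OF ge_uiw_uw])
  moreover have "blk p (m+1) = concat (replicate j (uiw p))"
    using False j by (cases "m + 1 \<ge> 0") (auto simp: blk_def)
  moreover have "blk p m = concat (replicate (Suc j) (uiw p))"
    using False j by (simp add: blk_def del: replicate_Suc)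
  ultimately show ?thesis by (simp add: concat_rep_snoc[symmetric] del: replicate_Suc)
qed

lemma ge_blk_uiw: "gamma_eq (blk p m @ uiw p) (blk p (m - 1))"
proof (cases "m \<le> 0")
  case True
  then have "nat (-(m-1)) = Suc (nat (-m))" by simp
  then show ?thesis using True
    by (cases "m = 0") (auto simp: blk_def concat_rep_snoc gamma_eq.refl)
next
  case False
  define j where "j = nat (m-1)"
  have j: "nat m = Suc j" "nat (m-1) = j" using False unfolding j_def by arith+
  have "gamma_eq (concat (replicate j (uw p)) @ (uw p @ uiw p)) (concat (replicate j (uw p)) @ [])"
    by (rule ge_appL[OF ge_uw_uiw])
  moreover have "blk p m = concat (replicate (Suc j) (uw p))"
    using False j by (simp add: blk_def del: replicate_Suc)
  moreover have "blk p (m-1) = concat (replicate j (uw p))"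
    using False j by (simp add: blk_def)
  ultimately show ?thesis by (simp add: concat_rep_snoc[symmetric] del: replicate_Suc)
qed



declare gamma_eq.trans[trans]

definition el :: "('x::finite \<times> 'y::finite) list" where
  "el = (SOME xs. distinct xs \<and> set xs = UNIV)"

lemma el: "distinct (el :: ('a::finite \<times> 'b::finite) list) \<and> set (el :: ('a \<times> 'b) list) = UNIV"
proof -
  have "\<exists>xs :: ('a \<times> 'b) list. distinct xs \<and> set xs = UNIV"
    using finite_distinct_list[of "UNIV :: ('a \<times> 'b) set"] by auto
  then show ?thesis unfolding el_def by (rule someI_ex)
qed

definition Uw :: "('x::{finite,ab_group_add} \<times> 'y::{finite,ab_group_add} \<Rightarrow> int) \<Rightarrow> ('x \<times> 'y) list" where
  "Uw n = concat (map (\<lambda>p. blk p (n p)) el)"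

lemma Uw_split:
  fixes p :: "'x::{finite,ab_group_add} \<times> 'y::{finite,ab_group_add}"
  shows "\<exists>as bs. (\<forall>n. Uw n = concat (map (\<lambda>p. blk p (n p)) as) @ blk p (n p) @ concat (map (\<lambda>p. blk p (n p)) bs))
    \<and> p \<notin> set as \<and> p \<notin> set bs"
proof -
  have e: "distinct (el :: ('x \<times> 'y) list)" "set (el :: ('x \<times> 'y) list) = UNIV" using el by blast+
  obtain as bs where sp: "el = as @ p # bs" using e by (metis UNIV_I split_list)
  have "p \<notin> set as" "p \<notin> set bs" using e(1) unfolding sp by auto
  then show ?thesis by (intro exI[of _ as] exI[of _ bs]) (simp add: Uw_def sp)
qed

lemma ge_Uw_step:
  fixes p :: "'x::{finite,ab_group_add} \<times> 'y::{finite,ab_group_add}"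
  assumes x0: "ssum x = 0" and st: "\<And>m. gamma_eq (blk p m @ x) (blk p (m + d))"
  shows "gamma_eq (Uw n @ x) (Uw (n(p := n p + d)))"
proof -
  obtain as bs where U: "\<And>n. Uw n = concat (map (\<lambda>p. blk p (n p)) as) @ blk p (n p) @ concat (map (\<lambda>p. blk p (n p)) bs)"
    and nd: "p \<notin> set as" "p \<notin> set bs" using Uw_split[of p] by blast
  define A where "A = concat (map (\<lambda>p. blk p (n p)) as)"
  define B where "B = concat (map (\<lambda>p. blk p (n p)) bs)"
  have A': "concat (map (\<lambda>q. blk q ((n(p := n p + d)) q)) as) = A"
    unfolding A_def using nd by (intro arg_cong[where f=concat] map_cong) auto
  have B': "concat (map (\<lambda>q. blk q ((n(p := n p + d)) q)) bs) = B"
    unfolding B_def using nd by (intro arg_cong[where f=concat] map_cong) auto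
  have B0: "ssum B = 0" unfolding B_def by (rule ssum_concat0) auto
  have "gamma_eq (A @ blk p (n p) @ (B @ x)) (A @ blk p (n p) @ (x @ B))"
    using ge_appL[OF ge_appL[OF ge_comm[OF B0 x0]]] .
  moreover have "gamma_eq (A @ (blk p (n p) @ x) @ B) (A @ blk p (n p + d) @ B)"
    by (rule ge_mid[OF st])
  ultimately have "gamma_eq (A @ blk p (n p) @ B @ x) (A @ blk p (n p + d) @ B)"
    using gamma_eq.trans by fastforce
  then show ?thesis using U[of n] U[of "n(p := n p + d)"] A' B' by (simp add: A_def B_def)
qed

lemma ge_Uw_uw: "gamma_eq (Uw n @ uw p) (Uw (n(p := n p + 1)))"
  by (rule ge_Uw_step[OF ssum_uw ge_blk_uw])

lemma ge_Uw_uiw: "gamma_eq (Uw n @ uiw p) (Uw (n(p := n p + -1)))"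
  by (rule ge_Uw_step[OF ssum_uiw]) (use ge_blk_uiw in simp)

lemma ge_key:
  fixes i :: "'x::{finite,ab_group_add}" and s c :: "'y::{finite,ab_group_add}"
  shows "gamma_eq [(0, s), (i, c)] (uiw (i, s) @ uw (i, s + c) @ [(0, s + c)])"
proof -
  have m: "gamma_eq [(i, -s), (i, s + c)] [(i, c)]" using gamma_eq.mult[of i "-s" "s+c"] by simp
  have "gamma_eq ([(0,s)] @ [(i, -s), (i, s + c)] @ [(0, -(s+c)), (0, s+c)]) ([(0,s)] @ [(i, c)] @ [])"
    by (intro ge_appL gamma_eq.app m ge_cancel')
  then show ?thesis by (simp add: uw_def uiw_def gamma_eq.sym)
qed

lemma reduce:
  fixes w :: "('x::{finite,ab_group_add} \<times> 'y::{finite,ab_group_add}) list"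
  shows "\<exists>n. gamma_eq w (Uw n @ [(0, ssum w)])"
proof (induction w rule: rev_induct)
  case Nil
  have "Uw (\<lambda>_. 0) = ([] :: ('x \<times> 'y) list)" by (simp add: Uw_def blk_def)
  moreover have "gamma_eq ([] :: ('x \<times> 'y) list) [((0::'x), (0::'y))]" by (rule gamma_eq.sym[OF gamma_eq.unit])
  ultimately have "gamma_eq [] (Uw (\<lambda>_. 0) @ [((0::'x), ssum ([] :: ('x \<times> 'y) list))])"
    by simp
  then show ?case by blast
next
  case (snoc a w)
  obtain i c where a: "a = (i, c)" by fastforce
  obtain n where n: "gamma_eq w (Uw n @ [(0, ssum w)])" using snoc.IH by blast
  define s where "s = ssum w"
  define n1 where "n1 = n((i,s) := n (i,s) + -1)"
  define n2 where "n2 = n1((i,s+c) := n1 (i,s+c) + 1)"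
  have "gamma_eq (w @ [a]) ((Uw n @ [(0, s)]) @ [(i,c)])"
    using ge_appR[OF n] by (simp add: a s_def)
  also have "gamma_eq \<dots> (Uw n @ (uiw (i, s) @ uw (i, s + c) @ [(0, s + c)]))"
    using ge_appL[OF ge_key] by simp
  also have "gamma_eq \<dots> (Uw n1 @ uw (i, s + c) @ [(0, s + c)])"
    using ge_appR[OF ge_Uw_uiw, of n "(i,s)" "uw (i, s + c) @ [(0, s + c)]"] by (simp add: n1_def)
  also have "gamma_eq \<dots> (Uw n2 @ [(0, s + c)])"
    using ge_appR[OF ge_Uw_uw, of n1 "(i,s+c)" "[(0, s + c)]"] by (simp add: n2_def)
  finally have "gamma_eq (w @ [a]) (Uw n2 @ [(0, ssum (w @ [a]))])"
    by (simp add: a s_def)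
  then show ?case by blast
qed



lemma phi_append0: "ssum b = 0 \<Longrightarrow> phi Q k (a @ b) e = phi Q k b e * phi Q k a e"
  by (simp add: phi_append)

lemma phi_concat: "(\<And>x. x \<in> set L \<Longrightarrow> ssum x = 0) \<Longrightarrow>
   phi Q k (concat L) e = prod_list (map (\<lambda>x. phi Q k x e) L)"
proof (induction L)
  case Nil then show ?case by simp
next
  case (Cons x L)
  have "ssum (concat L) = 0" using Cons.prems by (intro ssum_concat0) auto
  then show ?case using Cons by (simp add: phi_append0 mult.commute)
qed

context
  fixes Q :: "'x::{finite,ab_group_add} \<Rightarrow> 'y::{finite,ab_group_add} \<Rightarrow> complex"
  assumes nz: "\<And>i c. Q i c \<noteq> 0"
begin

lemma phi_uiw: "phi Q k (uiw p) e = inverse (phi Q k (uw p) e)"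
proof -
  have "phi Q k (uiw p @ uw p) = phi Q k []"
    using gamma_inv[where Q=Q, OF nz ge_uiw_uw] by blast
  then have "phi Q k (uw p) e * phi Q k (uiw p) e = 1"
    by (metis phi.simps(1) phi_append0 ssum_uw)
  then show ?thesis by (metis inverse_unique mult.commute)
qed

lemma phi_rep: "ssum x = 0 \<Longrightarrow> phi Q k (concat (replicate m x)) e = phi Q k x e ^ m"
  by (subst phi_concat) (auto simp: prod_list_replicate)

lemma phi_blk: "phi Q k (blk p m) e = phi Q k (uw p) e powi m"
  by (simp add: blk_def phi_rep phi_uiw power_int_def power_inverse)

lemma phi_Uw: "phi Q k (Uw n) e = (\<Prod>p\<in>UNIV. phi Q k (uw p) e powi n p)"
proof -
  have "phi Q k (Uw n) e = prod_list (map (\<lambda>p. phi Q k (uw p) e powi n p) el)"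
    unfolding Uw_def by (subst phi_concat) (auto simp: phi_blk o_def)
  moreover have e: "distinct (el :: ('x \<times> 'y) list)" "set (el :: ('x \<times> 'y) list) = UNIV" using el by blast+
  ultimately show ?thesis
    using prod.distinct_set_conv_list[OF e(1), of "\<lambda>p. phi Q k (uw p) e powi n p"] e(2) by simp
qed

end

lemma scalar_word:
  fixes Q :: "'x::{finite,ab_group_add} \<Rightarrow> 'y::{finite,ab_group_add} \<Rightarrow> complex"
  assumes nrm: "\<And>i c. cmod (Q i c) = 1" and sc: "word_mat Q k w = mat z"
  shows "ssum w = 0 \<and> (\<forall>e. phi Q k w e = z)"
proof -
  have ent: "(if r = e - ssum w then phi Q k w e else 0) = (if r = e then z else 0)" for r e
    using sc by (simp add: word_mat_eq vec_eq_iff mat_def) 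
  have s0: "ssum w = 0"
  proof (rule ccontr)
    assume "ssum w \<noteq> 0"
    then have "phi Q k w 0 = 0" using ent[of "0 - ssum w" 0] by simp
    then show False using norm_phi[of Q k w 0] nrm by simp
  qed
  moreover have "phi Q k w e = z" for e using ent[of e e] s0 by simp
  ultimately show ?thesis by blast
qed



definition E :: "('a::finite \<Rightarrow> complex) \<Rightarrow> ('a \<Rightarrow> int) \<Rightarrow> complex" where
  "E q r = (\<Prod>s\<in>UNIV. q s powi r s)"

definition dl :: "'a \<Rightarrow> 'a \<Rightarrow> int" where "dl x s = (if s = x then 1 else 0)"

context
  fixes q :: "'a::finite \<Rightarrow> complex"
  assumes nzq: "\<And>s. q s \<noteq> 0"
begin

lemma E_add: "E q (\<lambda>s. f s + g s) = E q f * E q g"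
  by (simp add: E_def power_int_add nzq prod.distrib)

lemma E_diff: "E q (\<lambda>s. f s - g s) = E q f / E q g"
  by (simp add: E_def power_int_diff nzq prod_dividef)

lemma E_dl: "E q (dl x) = q x"
proof -
  have "E q (dl x) = (\<Prod>s\<in>UNIV. if s = x then q x else 1)"
    unfolding E_def by (rule prod.cong) (auto simp: dl_def)
  then show ?thesis by simp
qed

lemma E_nz: "E q f \<noteq> 0"
  by (simp add: E_def nzq power_int_not_zero)

lemma prod_powi: "finite A \<Longrightarrow> (\<Prod>x\<in>A. h x) powi m = (\<Prod>x\<in>A. h x powi m)"
  for h :: "'b \<Rightarrow> complex"
  by (induction A rule: finite_induct) (auto simp: power_int_mult_distrib)

lemma E_powi: "E q f powi m = E q (\<lambda>s. f s * m)"
  unfolding E_def by (simp add: prod_powi power_int_mult)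

lemma E_prod: "finite P \<Longrightarrow> (\<Prod>p\<in>P. E q (f p)) = E q (\<lambda>s. \<Sum>p\<in>P. f p s)"
proof (induction P rule: finite_induct)
  case empty then show ?case by (simp add: E_def)
next
  case (insert x F)
  then show ?case by (simp add: E_add)
qed

end



definition atm :: "'x::ab_group_add \<Rightarrow> 'x \<times> 'y::ab_group_add \<Rightarrow> 'y \<Rightarrow> 'x \<times> 'y \<Rightarrow> int" where
  "atm k p e = (\<lambda>s. dl (0, e + snd p) s + dl (-k, e) s + dl (fst p, e) s + dl (fst p - k, e + snd p) s
       - dl (0, e) s - dl (-k, e + snd p) s - dl (fst p, e + snd p) s - dl (fst p - k, e) s)"

lemma phi_uw_E:
  fixes Q :: "'x::{finite,ab_group_add} \<Rightarrow> 'y::{finite,ab_group_add} \<Rightarrow> complex"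
  assumes nz: "\<And>i c. Q i c \<noteq> 0"
  shows "phi Q k (uw p) e = E (\<lambda>(i, c). Q i c) (atm k p e)"
proof -
  have nzq: "\<And>s. (\<lambda>(i, c). Q i c) s \<noteq> 0" using nz by auto
  obtain i c where p: "p = (i, c)" by fastforce
  show ?thesis
    unfolding atm_def p
    by (simp add: E_add[OF nzq] E_diff[OF nzq] E_dl[OF nzq] uw_def theta_def nz field_simps)
qed

lemma exps:
  fixes Q :: "'x::{finite,ab_group_add} \<Rightarrow> 'y::{finite,ab_group_add} \<Rightarrow> complex"
  assumes nz: "\<And>i c. Q i c \<noteq> 0" and gen: "generic Q"
    and h: "phi Q k (Uw n) e = phi Q k (Uw n) 0"
    and s: "fst s \<noteq> 0" "snd s \<noteq> 0"
  shows "(\<Sum>p\<in>UNIV. atm k p e s * n p) = (\<Sum>p\<in>UNIV. atm k p 0 s * n p)"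
proof -
  define q where "q = (\<lambda>(i, c). Q i c)"
  have nzq: "\<And>s. q s \<noteq> 0" using nz by (auto simp: q_def)
  define R where "R e = (\<lambda>s. \<Sum>p\<in>UNIV. atm k p e s * n p)" for e
  have ph: "phi Q k (Uw n) x = E q (R x)" for x
  proof -
    have "phi Q k (Uw n) x = (\<Prod>p\<in>UNIV. E q (atm k p x) powi n p)"
      by (simp add: phi_Uw nz phi_uw_E q_def)
    also have "\<dots> = (\<Prod>p\<in>UNIV. E q (\<lambda>s. atm k p x s * n p))"
      by (simp add: E_powi[OF nzq])
    also have "\<dots> = E q (R x)"
      by (simp add: E_prod[OF nzq] R_def)
    finally show ?thesis .
  qed
  have "E q (\<lambda>s. R e s - R 0 s) = 1"
    using h E_nz[OF nzq] by (simp add: ph E_diff[OF nzq])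
  then have "(\<Prod>s\<in>UNIV. q s powi (R e s - R 0 s)) = 1" by (simp add: E_def)
  moreover have "(\<Prod>s\<in>UNIV. q s powi (R e s - R 0 s)) = (\<Prod>s\<in>{(i, c). i \<noteq> 0 \<and> c \<noteq> 0}. q s powi (R e s - R 0 s))"
  proof (rule prod.mono_neutral_right)
    show "\<forall>t\<in>UNIV - {(i, c). i \<noteq> 0 \<and> c \<noteq> 0}. q t powi (R e t - R 0 t) = 1"
      using gen by (auto simp: generic_def dephased_def q_def)
  qed auto
  ultimately have "(\<Prod>s\<in>{(i, c). i \<noteq> 0 \<and> c \<noteq> 0}. q s powi (R e s - R 0 s)) = 1" by simp
  then have "\<forall>t\<in>{(i, c). i \<noteq> 0 \<and> c \<noteq> 0}. R e t - R 0 t = 0"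
  proof -
    have "root_independent_on q {(i, c). i \<noteq> 0 \<and> c \<noteq> 0}"
      using gen by (simp add: generic_def q_def)
    then show ?thesis unfolding root_independent_on_def
      using \<open>(\<Prod>s\<in>{(i, c). i \<noteq> 0 \<and> c \<noteq> 0}. q s powi (R e s - R 0 s)) = 1\<close>
      by (elim allE[of _ "\<lambda>s. R e s - R 0 s"]) blast
  qed
  then have "R e s - R 0 s = 0" using s by (cases s) auto
  then show ?thesis by (simp add: R_def)
qed



definition ind :: "bool \<Rightarrow> int" where "ind b = (if b then 1 else 0)"
definition wt :: "'x \<Rightarrow> 'x::zero \<Rightarrow> int" where "wt i j = 1 + ind (i = j) - ind (i = 0)"

lemma atm_spec:
  fixes j i :: "'x::ab_group_add" and g e c :: "'y::ab_group_add"
  assumes j: "j \<noteq> 0"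
  shows "atm (-j) (i, c) e (j, g) = wt i j * (ind (g - e = 0) - ind (g - e = c))"
proof -
  have a: "(i - - j = j) = (i = 0)" by (metis add_cancel_left_left diff_minus_eq_add)
  have b: "(g - e = c) = (g = e + c)" by (auto simp: algebra_simps)
  show ?thesis using j
    by (auto simp: atm_def dl_def wt_def ind_def a b algebra_simps)
qed

lemma card_minus0: "int (card (UNIV - {0::'x::{finite,zero}})) = int (card (UNIV :: 'x set)) - 1"
proof -
  have "card (UNIV :: 'x set) \<ge> 1" using finite_UNIV_card_ge_0[where 'a='x] by simp
  then show ?thesis by (simp add: card_Diff_singleton of_nat_diff)
qed

lemma comb:
  fixes n :: "'x::{finite,ab_group_add} \<times> 'y::{finite,ab_group_add} \<Rightarrow> int"
  assumes H: "\<And>j g e. j \<noteq> 0 \<Longrightarrow> g \<noteq> 0 \<Longrightarrow>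
      (\<Sum>p\<in>UNIV. atm (-j) p e (j, g) * n p) = (\<Sum>p\<in>UNIV. atm (-j) p 0 (j, g) * n p)"
    and j0: "j0 \<noteq> 0" and c0: "c0 \<noteq> 0"
  shows "n (j0, c0) = 0"
proof -
  define F where "F j f = (\<Sum>p\<in>UNIV. n p * (wt (fst p) j * (ind (f = 0) - ind (f = snd p))))"
    for j :: 'x and f :: 'y
  have FR: "(\<Sum>p\<in>UNIV. atm (-j) p e (j, g) * n p) = F j (g - e)" if "j \<noteq> 0" for j g e
    unfolding F_def by (rule sum.cong) (auto simp: atm_spec that)
  have Fc: "F j f = F j c0" if "j \<noteq> 0" for j f
    using H[OF that c0, of "c0 - f"] by (simp add: FR that)
  have Fs: "(\<Sum>f\<in>UNIV. F j f) = 0" for j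
  proof -
    have "(\<Sum>f\<in>UNIV. F j f) = (\<Sum>p\<in>UNIV. \<Sum>f\<in>UNIV. n p * (wt (fst p) j * (ind (f = 0) - ind (f = snd p))))"
      unfolding F_def by (rule sum.swap)
    also have "\<dots> = 0"
    proof (rule sum.neutral, rule ballI)
      fix p :: "'x \<times> 'y"
      have "(\<Sum>f\<in>UNIV. n p * (wt (fst p) j * (ind (f = 0) - ind (f = snd p))))
          = n p * (wt (fst p) j * ((\<Sum>f\<in>UNIV. ind (f = (0::'y))) - (\<Sum>f\<in>UNIV. ind (f = snd p))))"
        by (simp add: sum_distrib_left sum_subtractf right_diff_distrib)
      also have "\<dots> = 0" by (simp add: ind_def)
      finally show "(\<Sum>f\<in>UNIV. n p * (wt (fst p) j * (ind (f = 0) - ind (f = snd p)))) = 0" .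
    qed
    finally show ?thesis .
  qed
  have F0: "F j f = 0" if "j \<noteq> 0" for j f
  proof -
    have "(\<Sum>f\<in>UNIV. F j f) = (\<Sum>f\<in>(UNIV::'y set). F j c0)"
      by (rule sum.cong) (use Fc[OF that] in auto)
    then have "int (card (UNIV :: 'y set)) * F j c0 = 0" using Fs[of j] by simp
    then have "F j c0 = 0" by simp
    then show ?thesis using Fc[OF that] by simp
  qed
  define G where "G i f = (\<Sum>c\<in>UNIV. n (i, c) * (ind (f = 0) - ind (f = c)))" for i f
  define T where "T f = (\<Sum>i\<in>UNIV. G i f)" for f
  have FG: "F j f = T f + G j f - G 0 f" for j f
  proof -
    have "F j f = (\<Sum>i\<in>UNIV. \<Sum>c\<in>UNIV. n (i, c) * (wt i j * (ind (f = 0) - ind (f = c))))"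
      unfolding F_def UNIV_Times_UNIV[symmetric] sum.cartesian_product by (simp add: case_prod_beta)
    also have "\<dots> = (\<Sum>i\<in>UNIV. wt i j * G i f)"
      unfolding G_def by (simp add: sum_distrib_left algebra_simps)
    also have "\<dots> = (\<Sum>i\<in>UNIV. G i f + (if i = j then G i f else 0) - (if i = 0 then G i f else 0))"
      by (rule sum.cong) (auto simp: wt_def ind_def algebra_simps)
    also have "\<dots> = T f + G j f - G 0 f"
      by (simp add: sum.distrib sum_subtractf T_def)
    finally show ?thesis .
  qed
  have Gj: "G j f = G 0 f - T f" if "j \<noteq> 0" for j f
    using F0[OF that, of f] FG[of j f] by simp
  have TG: "T f = G 0 f" for f
  proof -
    have "T f = G 0 f + (\<Sum>i\<in>UNIV - {0}. G i f)"
      unfolding T_def by (simp add: sum.remove)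
    also have "\<dots> = G 0 f + (\<Sum>i\<in>UNIV - {0::'x}. G 0 f - T f)"
      by (simp add: Gj)
    also have "\<dots> = G 0 f + int (card (UNIV - {0::'x})) * (G 0 f - T f)" by simp
    finally have e1: "T f = G 0 f + int (card (UNIV - {0::'x})) * (G 0 f - T f)" .
    have "int (card (UNIV - {0::'x})) = int (card (UNIV :: 'x set)) - 1" by (rule card_minus0)
    then have "int (card (UNIV :: 'x set)) * (T f - G 0 f) = 0" using e1 by (simp add: algebra_simps)
    then show ?thesis by simp
  qed
  have "G j0 c0 = 0" using Gj[OF j0] TG by simp
  moreover have "G j0 c0 = - n (j0, c0)"
  proof -
    have "G j0 c0 = (\<Sum>c\<in>UNIV. - (if c = c0 then n (j0, c) else 0))"
      unfolding G_def by (rule sum.cong) (auto simp: ind_def c0)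
    then show ?thesis by (simp add: sum_negf)
  qed
  ultimately show ?thesis by simp
qed



lemma ge_uw_triv:
  assumes "fst p = 0 \<or> snd p = 0"
  shows "gamma_eq (uw p) [] \<and> gamma_eq (uiw p) []"
proof (cases "fst p = 0")
  case True
  then show ?thesis using ge_cancel[of 0 "snd p"] by (simp add: uw_def uiw_def)
next
  case False
  then have s: "snd p = 0" using assms by simp
  have "gamma_eq ([(fst p, 0)] @ [(0, 0)]) ([] @ [])" by (intro gamma_eq.app gamma_eq.unit)
  moreover have "gamma_eq ([(0, 0)] @ [(fst p, 0)]) ([] @ [])" by (intro gamma_eq.app gamma_eq.unit)
  ultimately show ?thesis using s by (simp add: uw_def uiw_def)
qed

lemma ge_concat: "(\<And>x. x \<in> set L \<Longrightarrow> gamma_eq x []) \<Longrightarrow> gamma_eq (concat L) []"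
proof (induction L)
  case Nil then show ?case by (simp add: gamma_eq.refl)
next
  case (Cons x L)
  have "gamma_eq (x @ concat L) ([] @ [])"
    using Cons by (intro gamma_eq.app) auto
  then show ?case by simp
qed

lemma Uw_triv:
  assumes "\<And>p. fst p \<noteq> 0 \<Longrightarrow> snd p \<noteq> 0 \<Longrightarrow> n p = 0"
  shows "gamma_eq (Uw n) []"
  unfolding Uw_def
proof (rule ge_concat)
  fix x assume "x \<in> set (map (\<lambda>p. blk p (n p)) el)"
  then obtain p where x: "x = blk p (n p)" by auto
  show "gamma_eq x []"
  proof (cases "n p = 0")
    case True then show ?thesis by (simp add: x blk_def gamma_eq.refl)
  next
    case False
    then have t: "gamma_eq (uw p) [] \<and> gamma_eq (uiw p) []" using assms ge_uw_triv by blast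
    show ?thesis unfolding x blk_def using t by (auto intro!: ge_concat)
  qed
qed

theorem lemma4p4:
  fixes Q :: "'x::{finite,ab_group_add} \<Rightarrow> 'y::{finite,ab_group_add} \<Rightarrow> complex"
  assumes circle: "\<forall>i c. on_circle (Q i c)"
    and gen: "generic Q"
  shows "(\<forall>k. (\<forall>w v. gamma_eq w v \<longrightarrow> word_mat Q k w = word_mat Q k v)
              \<and> (\<forall>w. unitary_mat (word_mat Q k w)))
         \<and> (\<forall>w. (\<forall>k. \<exists>z. word_mat Q k w = mat z) \<longrightarrow> gamma_eq w [])"
proof -
  have nrm: "\<And>i c. cmod (Q i c) = 1" using circle by (simp add: on_circle_def)
  have nz: "\<And>i c. Q i c \<noteq> 0" using nrm by (metis norm_zero zero_neq_one)
  have P1: "\<forall>k. (\<forall>w v. gamma_eq w v \<longrightarrow> word_mat Q k w = word_mat Q k v)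
              \<and> (\<forall>w. unitary_mat (word_mat Q k w))"
  proof (intro allI conjI impI)
    fix k and w v :: "('x \<times> 'y) list" assume "gamma_eq w v"
    then show "word_mat Q k w = word_mat Q k v"
    proof -
      have h: "ssum w = ssum v" "phi Q k w = phi Q k v"
        using gamma_inv[where Q=Q and k=k, OF nz \<open>gamma_eq w v\<close>] by auto
      show ?thesis unfolding word_mat_eq h(1) h(2) ..
    qed
  next
    fix k and w :: "('x \<times> 'y) list" show "unitary_mat (word_mat Q k w)" by (rule unitary_word[where Q=Q, OF nrm])
  qed
  have P2: "gamma_eq w []" if H: "\<forall>k. \<exists>z. word_mat Q k w = mat z" for w :: "('x \<times> 'y) list"
  proof -
    obtain n where r: "gamma_eq w (Uw n @ [(0, ssum w)])" using reduce by blast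
    have s0: "ssum w = 0" using H scalar_word[where Q=Q, OF nrm] by blast
    have const: "phi Q k (Uw n) e = phi Q k (Uw n) 0" for k e
    proof -
      obtain z where "word_mat Q k w = mat z" using H by blast
      then have z: "\<And>e. phi Q k w e = z" using scalar_word[where Q=Q, OF nrm] by blast
      have "phi Q k w = phi Q k (Uw n @ [(0, 0)])"
        using gamma_inv[where Q=Q and k=k, OF nz r] s0 by simp
      then have "phi Q k w x = phi Q k (Uw n) x" for x
        by (simp add: phi_append theta_def nz)
      then show ?thesis using z by metis
    qed
    have nn: "n p = 0" if "fst p \<noteq> 0" "snd p \<noteq> 0" for p
    proof -
      obtain j c where p: "p = (j, c)" by fastforce
      show ?thesis unfolding p
      proof (rule comb)
        fix j' :: 'x and g' e' :: 'y
        assume "j' \<noteq> 0" "g' \<noteq> 0"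
        then show "(\<Sum>p\<in>UNIV. atm (-j') p e' (j', g') * n p) = (\<Sum>p\<in>UNIV. atm (-j') p 0 (j', g') * n p)"
          by (intro exps[OF nz gen const]) auto
      qed (use that p in auto)
    qed
    have u: "gamma_eq (Uw n) []" by (rule Uw_triv) (rule nn)
    have "gamma_eq (Uw n @ [((0::'x), (0::'y))]) ([] @ [])"
      by (rule gamma_eq.app[OF u gamma_eq.unit])
    then have "gamma_eq w ([] @ [])" using gamma_eq.trans[OF r] s0 by simp
    then show ?thesis by simp
  qed
  show ?thesis using P1 P2 by blast
qed

end
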